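(* Let $K\subset\mathbb{R}^3$ be a centrally symmetric convex body and let $A_1,A_2,A_3\in\partial K$ satisfy $A_1\cdot(A_2\times A_3)>0$. For $(i,j)\in\{(1,2),(2,3),(3,1)\}$ put $$\overline{C_{i,j}}=\frac12\,(A_i\times A_j)\int_0^1\rho_K\big((1-t)A_i+tA_j\big)^2\,dt\ \in\mathbb{R}^3 .$$ Then for every $P\in K$, $$\frac13\Big(P\cdot\overline{C_{1,2}}+P\cdot\overline{C_{2,3}}+P\cdot\overline{C_{3,1}}\Big)\ \le\ \big|K\cap\{t_1A_1+t_2A_2+t_3A_3:\ t_1,t_2,t_3\ge 0\}\big|.$$
   Context: A convex body is a compact convex set with nonempty interior; centrally symmetric means $K=-K$. The radial function is $\rho_K(x)=\max\{\lambda\ge0:\lambda x\in K\}$ for $x\neq 0$. $\times$ is the cross product and $|\cdot|$ is volume. (The set on the right is the cone from the origin over the "triangle" on $\partial K$ with vertices $A_1,A_2,A_3$ whose sides are the curves $t\mapsto\rho_K((1-t)A_i+tA_j)((1-t)A_i+tA_j)$.) *)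

theory Defs
  imports "HOL-Analysis.Analysis"
begin

definition convex_body :: "(real^3) set \<Rightarrow> bool" where
  "convex_body K \<longleftrightarrow> compact K \<and> convex K \<and> interior K \<noteq> {}"

definition centrally_symmetric :: "(real^3) set \<Rightarrow> bool" where
  "centrally_symmetric K \<longleftrightarrow> uminus ` K = K"

definition radial :: "(real^3) set \<Rightarrow> real^3 \<Rightarrow> real" where
  "radial K x = Sup {l. 0 \<le> l \<and> l *\<^sub>R x \<in> K}"

end

theory Submission
  imports Defs
begin

lemma recon3:
  fixes a b c x :: "real^3"
  shows "(a \<bullet> cross3 b c) *\<^sub>R x = (x \<bullet> cross3 b c) *\<^sub>R a + (x \<bullet> cross3 c a) *\<^sub>R b + (x \<bullet> cross3 a b) *\<^sub>R c"
  by (simp add: cross3_simps forall_3)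

locale cbody =
  fixes K :: "(real^3) set"
  assumes cK: "compact K" and vK: "convex K" and iK: "0 \<in> interior K"
begin

lemma zK: "0 \<in> K" using iK interior_subset by blast

lemma radial_set:
  assumes x: "x \<noteq> 0"
  shows "closed {l. 0 \<le> l \<and> l *\<^sub>R x \<in> K}" "bdd_above {l. 0 \<le> l \<and> l *\<^sub>R x \<in> K}"
    "{l. 0 \<le> l \<and> l *\<^sub>R x \<in> K} \<noteq> {}"
proof -
  have ct: "\<And>y. continuous (at y) (\<lambda>l::real. l *\<^sub>R x)"
    by (rule continuous_scaleR[OF continuous_ident continuous_const])
  have "closed ((\<lambda>l. l *\<^sub>R x) -` K)"
    by (rule continuous_closed_vimage[OF compact_imp_closed[OF cK] ct])
  then have "closed ({0..} \<inter> (\<lambda>l. l *\<^sub>R x) -` K)" by (intro closed_Int) auto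
  then show "closed {l. 0 \<le> l \<and> l *\<^sub>R x \<in> K}" by (simp add: vimage_def Collect_conj_eq atLeast_def)
  obtain B where B: "\<And>y. y \<in> K \<Longrightarrow> norm y \<le> B"
    using compact_imp_bounded[OF cK] bounded_iff by blast
  show "bdd_above {l. 0 \<le> l \<and> l *\<^sub>R x \<in> K}"
  proof (rule bdd_aboveI[where M="B / norm x"])
    fix l assume "l \<in> {l. 0 \<le> l \<and> l *\<^sub>R x \<in> K}"
    then have "l * norm x \<le> B" using B[of "l *\<^sub>R x"] by auto
    then show "l \<le> B / norm x" using x by (simp add: field_simps)
  qed
  show "{l. 0 \<le> l \<and> l *\<^sub>R x \<in> K} \<noteq> {}" using zK by force
qed

lemma radial_in:
  assumes x: "x \<noteq> 0"
  shows "radial K x *\<^sub>R x \<in> K" "0 \<le> radial K x"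
proof -
  have "radial K x \<in> {l. 0 \<le> l \<and> l *\<^sub>R x \<in> K}"
    unfolding radial_def by (rule closed_contains_Sup[OF radial_set(3,2,1)[OF x]])
  then show "radial K x *\<^sub>R x \<in> K" "0 \<le> radial K x" by auto
qed

lemma radial_iff:
  assumes x: "x \<noteq> 0" and l: "0 \<le> l"
  shows "l *\<^sub>R x \<in> K \<longleftrightarrow> l \<le> radial K x"
proof
  assume "l *\<^sub>R x \<in> K"
  then show "l \<le> radial K x" unfolding radial_def
    using radial_set[OF x] l by (intro cSup_upper) auto
next
  assume le: "l \<le> radial K x"
  show "l *\<^sub>R x \<in> K"
  proof (cases "radial K x = 0")
    case True then show ?thesis using le l zK by auto
  next
    case False
    then have pos: "radial K x > 0" using radial_in[OF x] by auto
    have "(l / radial K x) *\<^sub>R (radial K x *\<^sub>R x) + (1 - l / radial K x) *\<^sub>R 0 \<in> K"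
      by (rule convexD[OF vK radial_in(1)[OF x] zK]) (use pos le l in \<open>auto simp: field_simps\<close>)
    then show ?thesis using pos by simp
  qed
qed

lemma radial_pos:
  assumes x: "x \<noteq> 0"
  shows "0 < radial K x"
proof -
  obtain e where e: "e > 0" "ball 0 e \<subseteq> K" using iK mem_interior by blast
  have "(e / (2 * norm x)) *\<^sub>R x \<in> K"
    using e x by (intro subsetD[OF e(2)]) (auto simp: norm_scaleR)
  then have "e / (2 * norm x) \<le> radial K x" using radial_iff[OF x] e by auto
  moreover have "0 < e / (2 * norm x)" using e x by auto
  ultimately show ?thesis by linarith
qed

definition gge where "gge x = (if x = 0 then 0 else inverse (radial K x))"

lemma gge_iff:
  assumes m: "0 < m"
  shows "inverse m *\<^sub>R x \<in> K \<longleftrightarrow> gge x \<le> m"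
proof (cases "x = 0")
  case True then show ?thesis using zK m by (simp add: gge_def)
next
  case False
  have "inverse m *\<^sub>R x \<in> K \<longleftrightarrow> inverse m \<le> radial K x"
    using radial_iff[OF False] m by auto
  also have "\<dots> \<longleftrightarrow> inverse (radial K x) \<le> m"
    using radial_pos[OF False] m by (simp add: field_simps)
  finally show ?thesis using False by (simp add: gge_def)
qed

lemma gge_nonneg: "0 \<le> gge x"
  by (simp add: gge_def) (meson less_imp_le radial_pos)

lemma gge_convex: "convex_on UNIV gge"
proof (rule convex_onI)
  fix t :: real and u v :: "real^3"
  assume t: "0 < t" "t < 1"
  show "gge ((1 - t) *\<^sub>R u + t *\<^sub>R v) \<le> (1 - t) * gge u + t * gge v"
  proof (rule field_le_epsilon)
    fix e :: real assume e: "0 < e"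
    define m1 where "m1 = gge u + e"
    define m2 where "m2 = gge v + e"
    have g0: "0 \<le> gge u" "0 \<le> gge v" by (rule gge_nonneg)+
    have m: "0 < m1" "0 < m2" unfolding m1_def m2_def using g0 e by linarith+
    have u1: "inverse m1 *\<^sub>R u \<in> K \<longleftrightarrow> gge u \<le> m1" by (rule gge_iff[OF m(1)])
    have u2: "gge u \<le> m1" using e unfolding m1_def by linarith
    have u: "inverse m1 *\<^sub>R u \<in> K" using u1 u2 by blast
    have v1: "inverse m2 *\<^sub>R v \<in> K \<longleftrightarrow> gge v \<le> m2" by (rule gge_iff[OF m(2)])
    have v2: "gge v \<le> m2" using e unfolding m2_def by linarith
    have v: "inverse m2 *\<^sub>R v \<in> K" using v1 v2 by blast
    define s where "s = (1 - t) * m1 + t * m2"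
    have s: "0 < s" using m t by (simp add: s_def add_pos_pos)
    have c1: "0 \<le> (1 - t) * m1 / s" using m t s by auto
    have c2: "0 \<le> t * m2 / s" using m t s by auto
    have c3: "(1 - t) * m1 / s + t * m2 / s = 1"
    proof -
      have "(1 - t) * m1 / s + t * m2 / s = ((1 - t) * m1 + t * m2) / s" by (rule add_divide_distrib[symmetric])
      also have "\<dots> = 1" using s unfolding s_def by simp
      finally show ?thesis .
    qed
    have "((1 - t) * m1 / s) *\<^sub>R (inverse m1 *\<^sub>R u) + (t * m2 / s) *\<^sub>R (inverse m2 *\<^sub>R v) \<in> K"
      by (rule convexD[OF vK u v c1 c2 c3])
    moreover have "((1 - t) * m1 / s) *\<^sub>R (inverse m1 *\<^sub>R u) + (t * m2 / s) *\<^sub>R (inverse m2 *\<^sub>R v)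
        = inverse s *\<^sub>R ((1 - t) *\<^sub>R u + t *\<^sub>R v)"
    proof -
      have e1: "(1 - t) * m1 / s * inverse m1 = inverse s * (1 - t)" using m s by (simp add: field_simps)
      have e2: "t * m2 / s * inverse m2 = inverse s * t" using m s by (simp add: field_simps)
      show ?thesis by (simp only: scaleR_add_right scaleR_scaleR e1 e2)
    qed
    ultimately have "gge ((1 - t) *\<^sub>R u + t *\<^sub>R v) \<le> s" using gge_iff[OF s] by simp
    then show "gge ((1 - t) *\<^sub>R u + t *\<^sub>R v) \<le> (1 - t) * gge u + t * gge v + e"
    proof -
      have "s = (1 - t) * gge u + t * gge v + e" unfolding s_def m1_def m2_def by (simp add: algebra_simps)
      then show ?thesis using \<open>gge ((1 - t) *\<^sub>R u + t *\<^sub>R v) \<le> s\<close> by linarith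
    qed
  qed
qed simp

lemma gge_pos: "x \<noteq> 0 \<Longrightarrow> 0 < gge x"
  using radial_pos[of x] by (simp add: gge_def)

lemma gge_cont: "continuous_on UNIV gge"
  by (rule convex_on_continuous[OF open_UNIV gge_convex])

lemma radial_cont: "continuous_on (-{0}) (radial K)"
proof -
  have nz: "\<forall>x\<in>-{0}. gge x \<noteq> 0"
  proof
    fix x :: "real^3" assume "x \<in> -{0}"
    then have "x \<noteq> 0" by simp
    from gge_pos[OF this] show "gge x \<noteq> 0" by simp
  qed
  have "continuous_on (-{0}) (\<lambda>x. inverse (gge x))"
    by (intro continuous_on_inverse continuous_on_subset[OF gge_cont] nz) auto
  moreover have "continuous_on (-{0}) (radial K) = continuous_on (-{0}) (\<lambda>x. inverse (gge x))"
  proof (rule continuous_on_cong[OF refl])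
    fix x :: "real^3" assume "x \<in> -{0}"
    then show "radial K x = inverse (gge x)" by (simp add: gge_def)
  qed
  ultimately show ?thesis by simp
qed

end

definition tet :: "real^3 \<Rightarrow> real^3 \<Rightarrow> real^3 \<Rightarrow> (real^3) set" where
  "tet a1 a2 a3 = {x1 *\<^sub>R a1 + x2 *\<^sub>R a2 + x3 *\<^sub>R a3 | x1 x2 x3. 0 \<le> x1 \<and> 0 \<le> x2 \<and> 0 \<le> x3 \<and> x1 + x2 + x3 \<le> 1}"

lemma std3: "convex hull (insert 0 Basis) = {x::real^3. 0 \<le> x$1 \<and> 0 \<le> x$2 \<and> 0 \<le> x$3 \<and> x$1 + x$2 + x$3 \<le> 1}"
proof -
  have B: "(Basis :: (real^3) set) = (\<lambda>i. axis i 1) ` UNIV"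
    by (auto simp: Basis_vec_def)
  have inj: "inj (\<lambda>i::3. axis i (1::real))"
    by (auto simp: inj_def axis_eq_axis)
  have s: "sum (\<lambda>i. x \<bullet> i) (Basis :: (real^3) set) = x$1 + x$2 + x$3" for x :: "real^3"
    unfolding B by (simp add: sum.reindex[OF inj] inner_axis sum_3)
  have a: "(\<forall>i\<in>(Basis :: (real^3) set). 0 \<le> x \<bullet> i) \<longleftrightarrow> 0 \<le> x$1 \<and> 0 \<le> x$2 \<and> 0 \<le> x$3" for x :: "real^3"
    unfolding B by (simp add: inner_axis forall_3)
  show ?thesis unfolding std_simplex using s a by auto
qed

lemma tet_image: "tet a1 a2 a3 = (\<lambda>x::real^3. x$1 *\<^sub>R a1 + x$2 *\<^sub>R a2 + x$3 *\<^sub>R a3) ` (convex hull (insert 0 Basis))"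
proof -
  have "\<exists>x::real^3. x$1 = x1 \<and> x$2 = x2 \<and> x$3 = x3" for x1 x2 x3
    by (rule exI[of _ "vector [x1, x2, x3]"]) simp
  then show ?thesis unfolding tet_def std3 image_def by (auto, metis)
qed

lemma tet_measure:
  shows "tet a1 a2 a3 \<in> lmeasurable" "measure lebesgue (tet a1 a2 a3) = \<bar>a1 \<bullet> cross3 a2 a3\<bar> / 6"
proof -
  define f where "f = (\<lambda>x::real^3. x$1 *\<^sub>R a1 + x$2 *\<^sub>R a2 + x$3 *\<^sub>R a3)"
  define std where "std = (convex hull (insert 0 Basis) :: (real^3) set)"
  have lin: "linear f" unfolding f_def
    by (rule linearI) (simp_all add: algebra_simps scaleR_add_left)
  have cstd: "compact std" unfolding std_def
    by (intro finite_imp_compact_convex_hull) auto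
  have img: "tet a1 a2 a3 = f ` std" unfolding f_def std_def by (rule tet_image)
  have "measure lebesgue (f ` std) = \<bar>det (matrix f)\<bar> * measure lebesgue std"
    using cstd lin by (intro measure_lebesgue_linear_transformation)
      (auto intro: compact_imp_bounded dest: compact_imp_closed)
  also have "measure lebesgue std = measure lborel std" using cstd
    by (intro measure_completion) (auto dest: compact_imp_closed)
  also have "measure lborel std = 1 / 6" unfolding std_def
    by (simp add: content_std_simplex fact_numeral)
  also have "det (matrix f) = a1 \<bullet> cross3 a2 a3"
    unfolding f_def by (simp add: matrix_def det_3 cross3_simps axis_def)
  finally show "measure lebesgue (tet a1 a2 a3) = \<bar>a1 \<bullet> cross3 a2 a3\<bar> / 6" using img by simp
  show "tet a1 a2 a3 \<in> lmeasurable" unfolding img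
    by (intro lmeasurable_compact compact_continuous_image cstd linear_continuous_on linear_conv_bounded_linear[THEN iffD1] lin)
qed

lemma negl_span2: "negligible (span {x, y :: real^3})"
proof (rule negligible_lowdim)
  have "dim (span {x, y}) \<le> card {x, y}" by (rule dim_le_card) auto
  also have "card {x, y} \<le> 2" by (cases "x = y") auto
  finally show "dim (span {x, y}) < DIM(real^3)" by simp
qed

locale face = cbody +
  fixes B1 B2 P :: "real^3"
  assumes nz: "cross3 B1 B2 \<noteq> 0" and PK: "P \<in> K" and Qnz: "P \<bullet> cross3 B1 B2 \<noteq> 0"
begin

definition w :: "real \<Rightarrow> real^3" where "w t = (1 - t) *\<^sub>R B1 + t *\<^sub>R B2"
definition h :: "real \<Rightarrow> real" where "h t = radial K (w t)"
definition G :: "real \<Rightarrow> real \<Rightarrow> (real^3) set" where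
  "G a b = {(1 - l) *\<^sub>R P + (l * r) *\<^sub>R w t | l t r. 0 \<le> l \<and> l \<le> 1 \<and> a \<le> t \<and> t \<le> b \<and> 0 \<le> r \<and> r \<le> h t}"

lemma cross_w: "cross3 (w a) (w b) = (b - a) *\<^sub>R cross3 B1 B2"
  unfolding w_def by (simp add: cross3_simps forall_3)

lemma w_nz: "w t \<noteq> 0"
proof
  assume "w t = 0"
  then have "cross3 (w t) (w (t + 1)) = 0" by simp
  then show False using nz by (simp add: cross_w)
qed

lemma dotw: "w t \<bullet> cross3 B1 B2 = 0"
  unfolding w_def by (simp add: inner_add_left dot_cross_self)

lemma h_pos: "0 < h t" unfolding h_def by (rule radial_pos[OF w_nz])

lemma w_cont: "continuous_on UNIV w"
  unfolding w_def by (intro continuous_on_add continuous_on_scaleR continuous_on_diff continuous_on_const continuous_on_id)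

lemma h_cont: "continuous_on UNIV h"
  unfolding h_def by (rule continuous_on_compose2[OF radial_cont w_cont]) (auto simp: w_nz)

lemma rw_in: "0 \<le> r \<Longrightarrow> r \<le> h t \<Longrightarrow> r *\<^sub>R w t \<in> K"
  unfolding h_def using radial_iff[OF w_nz] by blast

lemma G_sub_K: "G a b \<subseteq> K"
proof
  fix x assume "x \<in> G a b"
  then obtain l t r where x: "x = (1 - l) *\<^sub>R P + (l * r) *\<^sub>R w t" and
    l: "0 \<le> l" "l \<le> 1" and r: "0 \<le> r" "r \<le> h t" unfolding G_def by blast
  have "(1 - l) *\<^sub>R P + l *\<^sub>R (r *\<^sub>R w t) \<in> K"
    by (rule convexD[OF vK PK rw_in[OF r]]) (use l in auto)
  then show "x \<in> K" using x by simp
qed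

lemma G_compact: "compact (G a b)"
proof (cases "a \<le> b")
  case False
  then have "G a b = {}" unfolding G_def by auto
  then show ?thesis by simp
next
  case True
  have "compact (h ` {a..b})" by (rule compact_continuous_image[OF continuous_on_subset[OF h_cont] compact_Icc]) auto
  then obtain R where R: "\<And>t. t \<in> {a..b} \<Longrightarrow> \<bar>h t\<bar> \<le> R"
    using compact_imp_bounded bounded_real by (metis imageI)
  define D where "D = Sigma {0..1::real} (\<lambda>_. Sigma {a..b} (\<lambda>_. {0..R})) \<inter> {z. snd (snd z) \<le> h (fst (snd z))}"
  define F where "F = (\<lambda>z::real \<times> real \<times> real. (1 - fst z) *\<^sub>R P + (fst z * snd (snd z)) *\<^sub>R w (fst (snd z)))"
  have cD: "compact D" unfolding D_def
  proof (rule compact_Int_closed)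
    show "compact (Sigma {0..1::real} (\<lambda>_. Sigma {a..b} (\<lambda>_. {0..R})))"
      by (intro compact_Times compact_Icc)
    have c1: "continuous_on UNIV (\<lambda>z::real \<times> real \<times> real. snd (snd z))"
      by (intro continuous_on_snd continuous_on_id)
    have c2: "continuous_on UNIV (\<lambda>z::real \<times> real \<times> real. h (fst (snd z)))"
      by (rule continuous_on_compose2[OF h_cont continuous_on_fst[OF continuous_on_snd[OF continuous_on_id]]]) auto
    show "closed {z::real \<times> real \<times> real. snd (snd z) \<le> h (fst (snd z))}"
      by (rule closed_Collect_le[OF c1 c2])
  qed
  have cF: "continuous_on D F" unfolding F_def
    by (intro continuous_on_add continuous_on_scaleR continuous_on_diff continuous_on_const continuous_on_fst
        continuous_on_snd continuous_on_id continuous_on_mult continuous_on_compose2[OF w_cont]) auto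
  have "G a b = F ` D"
  proof
    show "G a b \<subseteq> F ` D"
    proof
      fix x assume "x \<in> G a b"
      then obtain l t r where x: "x = (1 - l) *\<^sub>R P + (l * r) *\<^sub>R w t" and
        c: "0 \<le> l" "l \<le> 1" "a \<le> t" "t \<le> b" "0 \<le> r" "r \<le> h t" unfolding G_def by blast
      have "r \<le> R" using R[of t] c by auto
      then have "(l, t, r) \<in> D" unfolding D_def using c by auto
      moreover have "x = F (l, t, r)" unfolding F_def x by simp
      ultimately show "x \<in> F ` D" by blast
    qed
    show "F ` D \<subseteq> G a b" unfolding D_def F_def G_def by force
  qed
  then show ?thesis using compact_continuous_image[OF cF cD] by simp
qed

lemma G_meas: "G a b \<in> lmeasurable" by (rule lmeasurable_compact[OF G_compact])

lemma G_Un: 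
  assumes "a \<le> b" "b \<le> c"
  shows "G a c = G a b \<union> G b c"
proof
  show "G a c \<subseteq> G a b \<union> G b c"
  proof
    fix x assume "x \<in> G a c"
    then obtain l t r where x: "x = (1 - l) *\<^sub>R P + (l * r) *\<^sub>R w t" and
      c: "0 \<le> l" "l \<le> 1" "a \<le> t" "t \<le> c" "0 \<le> r" "r \<le> h t" unfolding G_def by blast
    show "x \<in> G a b \<union> G b c"
    proof (cases "t \<le> b")
      case True
      then have "x \<in> G a b" unfolding G_def using x c by blast
      then show ?thesis by simp
    next
      case False
      then have "x \<in> G b c" unfolding G_def using x c by force
      then show ?thesis by simp
    qed
  qed
  show "G a b \<union> G b c \<subseteq> G a c" unfolding G_def using assms by force
qed

lemma G_Int: "G a b \<inter> G b c \<subseteq> span {P, w b}"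
proof
  fix x assume "x \<in> G a b \<inter> G b c"
  then obtain l t r l' t' r' where x: "x = (1 - l) *\<^sub>R P + (l * r) *\<^sub>R w t" and
    c: "0 \<le> l" "l \<le> 1" "a \<le> t" "t \<le> b" "0 \<le> r" "r \<le> h t" and
    x': "x = (1 - l') *\<^sub>R P + (l' * r') *\<^sub>R w t'" and
    c': "0 \<le> l'" "l' \<le> 1" "b \<le> t'" "t' \<le> c" "0 \<le> r'" "r' \<le> h t'" unfolding G_def by blast
  define n where "n = cross3 B1 B2"
  have "x \<bullet> n = (1 - l) * (P \<bullet> n)" unfolding x n_def by (simp add: inner_add_left dotw)
  moreover have "x \<bullet> n = (1 - l') * (P \<bullet> n)" unfolding x' n_def by (simp add: inner_add_left dotw)
  ultimately have ll: "l' = l" using Qnz unfolding n_def by simp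
  show "x \<in> span {P, w b}"
  proof (cases "l * r = 0")
    case True
    then have "x = (1 - l) *\<^sub>R P" unfolding x by auto
    then show ?thesis by (simp add: span_base span_mul)
  next
    case False
    have e: "(l * r) *\<^sub>R w t = (l * r') *\<^sub>R w t'" using x x' ll by simp
    have "(l * r) *\<^sub>R cross3 (w t) (w t') = (l * r') *\<^sub>R cross3 (w t') (w t')"
      using arg_cong[OF e, of "\<lambda>v. cross3 v (w t')"] by (simp add: cross_mult_left)
    then have "(l * r * (t' - t)) *\<^sub>R cross3 B1 B2 = 0" by (simp add: cross_w)
    then have "t' = t" using False nz by simp
    then have "t = b" using c c' by simp
    then show ?thesis unfolding x by (intro span_add span_mul span_base) auto
  qed
qed

lemma G_add:
  assumes "a \<le> b" "b \<le> c"
  shows "measure lebesgue (G a c) = measure lebesgue (G a b) + measure lebesgue (G b c)"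
proof -
  have n: "negligible (G a b \<inter> G b c)" by (rule negligible_subset[OF negl_span2 G_Int])
  have eq: "G a b \<union> G b c \<union> {} = G a c" using G_Un[OF assms] by simp
  have "measure lebesgue (G a c) = measure lebesgue (G a b) + measure lebesgue (G b c) + measure lebesgue ({}::(real^3) set)"
    by (rule measure_Un3_negligible[OF G_meas G_meas _ n _ _ eq]) auto
  then show ?thesis by simp
qed

lemma G_zero: "measure lebesgue (G a a) = 0"
proof -
  have "negligible (G a a)" using negligible_subset[OF negl_span2 G_Int[of a a a]] by simp
  then show ?thesis by (rule negligible_imp_measure0)
qed

end

context face
begin

definition Qv where "Qv = P \<bullet> cross3 B1 B2"

lemma w_aff: "w t = (1 - s) *\<^sub>R w a + s *\<^sub>R w b" if "t = a + s * (b - a)"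
proof -
  have c1: "1 - t = (1 - s) * (1 - a) + s * (1 - b)" using that by (simp add: algebra_simps)
  have c2: "t = (1 - s) * a + s * b" using that by (simp add: algebra_simps)
  show ?thesis unfolding w_def
    by (simp add: c1 c2 scaleR_add_right scaleR_add_left scaleR_scaleR algebra_simps)
qed

lemma tet_det: "\<bar>P \<bullet> cross3 (m *\<^sub>R w a) (m *\<^sub>R w b)\<bar> = m\<^sup>2 * (b - a) * \<bar>Qv\<bar>" if "a \<le> b"
proof -
  have "P \<bullet> cross3 (m *\<^sub>R w a) (m *\<^sub>R w b) = m * m * (b - a) * Qv"
    by (simp add: cross_mult_left cross_mult_right cross_w Qv_def)
  then show ?thesis using that by (simp add: abs_mult power2_eq_square)
qed

lemma tet_lower:
  assumes ab: "a < b" and m: "0 \<le> m" and mh: "\<And>t. t \<in> {a..b} \<Longrightarrow> m \<le> h t"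
  shows "tet P (m *\<^sub>R w a) (m *\<^sub>R w b) \<subseteq> G a b"
proof
  fix x assume "x \<in> tet P (m *\<^sub>R w a) (m *\<^sub>R w b)"
  then obtain x1 x2 x3 where x: "x = x1 *\<^sub>R P + x2 *\<^sub>R (m *\<^sub>R w a) + x3 *\<^sub>R (m *\<^sub>R w b)"
    and c: "0 \<le> x1" "0 \<le> x2" "0 \<le> x3" "x1 + x2 + x3 \<le> 1" unfolding tet_def by blast
  show "x \<in> G a b"
  proof (cases "x2 + x3 = 0")
    case True
    then have "x2 = 0" "x3 = 0" using c by auto
    then have "x = (1 - (1 - x1)) *\<^sub>R P + ((1 - x1) * 0) *\<^sub>R w a" using x by simp
    moreover have "0 \<le> h a" using h_pos[of a] by simp
    ultimately show ?thesis unfolding G_def using c ab by fastforce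
  next
    case False
    define s where "s = x2 + x3"
    define l where "l = 1 - x1"
    define t where "t = (x2 * a + x3 * b) / s"
    define r where "r = s * m / l"
    have s: "0 < s" using False c unfolding s_def by auto
    have l: "s \<le> l" "0 < l" "l \<le> 1" using c s unfolding s_def l_def by auto
    have ta: "a \<le> t" unfolding t_def using s c ab
      by (simp add: field_simps s_def) (metis add_mono mult_left_mono less_imp_le ab mult.commute)
    have tb: "t \<le> b" unfolding t_def using s c ab
      by (simp add: field_simps s_def) (metis add_mono mult_left_mono less_imp_le ab mult.commute)
    have r0: "0 \<le> r" unfolding r_def using s l m by auto
    have rm: "r \<le> m" unfolding r_def using s l m by (simp add: field_simps) (metis mult.commute mult_left_mono)
    have rh: "r \<le> h t" using rm mh[of t] ta tb by auto
    have lr: "l * r = s * m" unfolding r_def using l by simp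
    have c1: "s * m * (1 - t) = m * (x2 * (1 - a) + x3 * (1 - b))"
      unfolding t_def using s by (simp add: field_simps s_def)
    have c2: "s * m * t = m * (x2 * a + x3 * b)"
      unfolding t_def using s by (simp add: field_simps s_def)
    have "(l * r) *\<^sub>R w t = x2 *\<^sub>R (m *\<^sub>R w a) + x3 *\<^sub>R (m *\<^sub>R w b)"
    proof -
      have "(l * r) *\<^sub>R w t = (s * m * (1 - t)) *\<^sub>R B1 + (s * m * t) *\<^sub>R B2"
        unfolding lr w_def by (simp add: scaleR_add_right)
      also have "\<dots> = (m * (x2 * (1 - a) + x3 * (1 - b))) *\<^sub>R B1 + (m * (x2 * a + x3 * b)) *\<^sub>R B2"
        by (simp only: c1 c2)
      also have "\<dots> = x2 *\<^sub>R (m *\<^sub>R w a) + x3 *\<^sub>R (m *\<^sub>R w b)"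
        unfolding w_def by (simp add: algebra_simps)
      finally show ?thesis .
    qed
    then have "x = (1 - l) *\<^sub>R P + (l * r) *\<^sub>R w t" using x unfolding l_def by simp
    then show ?thesis unfolding G_def using l ta tb r0 rh by fastforce
  qed
qed

lemma tet_upper:
  assumes ab: "a < b" and M: "0 < M" and hM: "\<And>t. t \<in> {a..b} \<Longrightarrow> h t \<le> M"
  shows "G a b \<subseteq> tet P (M *\<^sub>R w a) (M *\<^sub>R w b)"
proof
  fix x assume "x \<in> G a b"
  then obtain l t r where x: "x = (1 - l) *\<^sub>R P + (l * r) *\<^sub>R w t" and
    c: "0 \<le> l" "l \<le> 1" "a \<le> t" "t \<le> b" "0 \<le> r" "r \<le> h t" unfolding G_def by blast
  define s where "s = (t - a) / (b - a)"
  have s: "0 \<le> s" "s \<le> 1" using c ab unfolding s_def by (auto simp: field_simps)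
  have ts: "t = a + s * (b - a)" using ab unfolding s_def by simp
  have rM: "r \<le> M" using c hM[of t] by auto
  define x2 where "x2 = l * r * (1 - s) / M"
  define x3 where "x3 = l * r * s / M"
  have x23: "x2 + x3 = l * r / M" unfolding x2_def x3_def using M by (simp add: field_simps)
  have lrM: "l * r / M \<le> l" using M rM c by (simp add: field_simps) (metis mult.commute mult_left_mono)
  have "x = (1 - l) *\<^sub>R P + x2 *\<^sub>R (M *\<^sub>R w a) + x3 *\<^sub>R (M *\<^sub>R w b)"
    unfolding x w_aff[OF ts] x2_def x3_def using M by (simp add: scaleR_add_right)
  moreover have "0 \<le> x2" "0 \<le> x3" unfolding x2_def x3_def using c s M by auto
  moreover have "(1 - l) + x2 + x3 \<le> 1" using x23 lrM by linarith
  ultimately show "x \<in> tet P (M *\<^sub>R w a) (M *\<^sub>R w b)" unfolding tet_def using c by fastforce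
qed

end

context face
begin

lemma G_bounds:
  assumes ab: "a < b" and e: "0 < e" and hK: "\<And>t. t \<in> {a..b} \<Longrightarrow> \<bar>(h t)\<^sup>2 - K0\<bar> \<le> e"
  shows "\<bar>measure lebesgue (G a b) - (b - a) * (\<bar>Qv\<bar> / 6) * K0\<bar> \<le> (b - a) * (\<bar>Qv\<bar> / 6) * e"
proof -
  define m where "m = sqrt (max 0 (K0 - e))"
  define M where "M = sqrt (K0 + e)"
  have hK0: "0 \<le> K0 + e" using hK[of a] ab by (auto simp: abs_le_iff) (smt (verit) zero_le_power2)
  have m0: "0 \<le> m" unfolding m_def by simp
  have mm: "m\<^sup>2 = max 0 (K0 - e)" unfolding m_def by simp
  have MM: "M\<^sup>2 = K0 + e" unfolding M_def using hK0 by simp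
  have M0: "0 < M"
  proof -
    have p: "0 < (h a)\<^sup>2" using h_pos[of a] by simp
    have q: "(h a)\<^sup>2 \<le> K0 + e" using hK[of a] ab by (auto simp: abs_le_iff)
    have "0 < K0 + e" using p q by linarith
    then show ?thesis unfolding M_def by simp
  qed
  have mh: "m \<le> h t" if "t \<in> {a..b}" for t
  proof -
    have "max 0 (K0 - e) \<le> (h t)\<^sup>2" using hK[OF that] by (auto simp: abs_le_iff)
    then have "m \<le> sqrt ((h t)\<^sup>2)" unfolding m_def by (rule real_sqrt_le_mono)
    then show ?thesis using h_pos[of t] by simp
  qed
  have hM: "h t \<le> M" if "t \<in> {a..b}" for t
  proof -
    have "(h t)\<^sup>2 \<le> K0 + e" using hK[OF that] by (auto simp: abs_le_iff)
    then have "sqrt ((h t)\<^sup>2) \<le> M" unfolding M_def by (rule real_sqrt_le_mono)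
    then show ?thesis using h_pos[of t] by simp
  qed
  have "measure lebesgue (tet P (m *\<^sub>R w a) (m *\<^sub>R w b)) \<le> measure lebesgue (G a b)"
    by (rule measure_mono_fmeasurable[OF tet_lower[OF ab m0 mh] fmeasurableD[OF tet_measure(1)] G_meas])
  then have lo: "m\<^sup>2 * (b - a) * \<bar>Qv\<bar> / 6 \<le> measure lebesgue (G a b)"
    using tet_measure(2) tet_det ab by simp
  have "measure lebesgue (G a b) \<le> measure lebesgue (tet P (M *\<^sub>R w a) (M *\<^sub>R w b))"
    by (rule measure_mono_fmeasurable[OF tet_upper[OF ab M0 hM] fmeasurableD[OF G_meas] tet_measure(1)])
  then have up: "measure lebesgue (G a b) \<le> M\<^sup>2 * (b - a) * \<bar>Qv\<bar> / 6"
    using tet_measure(2) tet_det ab by simp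
  have lo': "(K0 - e) * ((b - a) * (\<bar>Qv\<bar> / 6)) \<le> measure lebesgue (G a b)"
  proof -
    have "(K0 - e) * ((b - a) * (\<bar>Qv\<bar> / 6)) \<le> m\<^sup>2 * ((b - a) * (\<bar>Qv\<bar> / 6))"
      using ab by (intro mult_right_mono) (auto simp: mm)
    then show ?thesis using lo by simp
  qed
  have up': "measure lebesgue (G a b) \<le> (K0 + e) * ((b - a) * (\<bar>Qv\<bar> / 6))"
    using up MM by simp
  define X where "X = (b - a) * (\<bar>Qv\<bar> / 6)"
  have e1: "(K0 - e) * X = X * K0 - X * e" by (simp add: algebra_simps)
  have e2: "(K0 + e) * X = X * K0 + X * e" by (simp add: algebra_simps)
  have lo2: "(K0 - e) * X \<le> measure lebesgue (G a b)" using lo' unfolding X_def .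
  have up2: "measure lebesgue (G a b) \<le> (K0 + e) * X" using up' unfolding X_def .
  have lo3: "X * K0 - X * e \<le> measure lebesgue (G a b)" using lo2 e1 by simp
  have up3: "measure lebesgue (G a b) \<le> X * K0 + X * e" using up2 e2 by simp
  have "\<bar>measure lebesgue (G a b) - X * K0\<bar> \<le> X * e"
    using lo3 up3 unfolding abs_le_iff by linarith
  then show ?thesis by (simp add: X_def)
qed

definition V where "V x = measure lebesgue (G 0 x)"

lemma V_deriv:
  assumes x: "x \<in> {0..1}"
  shows "(V has_real_derivative (\<bar>Qv\<bar> / 6) * (h x)\<^sup>2) (at x within {0..1})"
proof -
  define c where "c = \<bar>Qv\<bar> / 6"
  have c: "0 < c" unfolding c_def Qv_def using Qnz by simp
  have hc: "isCont (\<lambda>t. (h t)\<^sup>2) x"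
    using h_cont by (intro continuous_intros) (simp add: continuous_on_eq_continuous_at)
  show ?thesis unfolding has_field_derivative_iff c_def[symmetric]
  proof (rule Lim_withinI)
    fix eps :: real assume eps: "0 < eps"
    define e where "e = eps / (2 * c)"
    have e: "0 < e" unfolding e_def using eps c by simp
    obtain d where d: "0 < d" and dh: "\<And>y. \<bar>y - x\<bar> < d \<Longrightarrow> \<bar>(h y)\<^sup>2 - (h x)\<^sup>2\<bar> < e"
    proof -
      from hc have "((\<lambda>t. (h t)\<^sup>2) \<longlongrightarrow> (h x)\<^sup>2) (at x)" by (simp add: isCont_def)
      then obtain d where "0 < d" "\<And>y. y \<noteq> x \<Longrightarrow> norm (y - x) < d \<Longrightarrow> norm ((h y)\<^sup>2 - (h x)\<^sup>2) < e"
        using e unfolding LIM_eq by blast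
      then show ?thesis using that[of d] e by (metis abs_zero cancel_comm_monoid_add_class.diff_cancel real_norm_def)
    qed
    show "\<exists>d>0. \<forall>y\<in>{0..1}. 0 < dist y x \<and> dist y x < d \<longrightarrow> dist ((V y - V x) / (y - x)) (c * (h x)\<^sup>2) \<le> eps"
    proof (intro exI[of _ d] conjI ballI impI d)
      fix y assume y: "y \<in> {0..1}" and dy: "0 < dist y x \<and> dist y x < d"
      have key: "\<bar>measure lebesgue (G a b) - (b - a) * c * (h x)\<^sup>2\<bar> \<le> (b - a) * c * e"
        if ab: "a < b" and ax: "\<bar>a - x\<bar> < d" "\<bar>b - x\<bar> < d" and xab: "x = a \<or> x = b" for a b
      proof -
        have "\<bar>(h t)\<^sup>2 - (h x)\<^sup>2\<bar> \<le> e" if "t \<in> {a..b}" for t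
          using dh[of t] that ax xab by (intro less_imp_le dh) auto
        then show ?thesis unfolding c_def by (rule G_bounds[OF ab e])
      qed
      have ce: "c * e = eps / 2" unfolding e_def using c by simp
      show "dist ((V y - V x) / (y - x)) (c * (h x)\<^sup>2) \<le> eps"
      proof (cases "x < y")
        case True
        have "V y = V x + measure lebesgue (G x y)" unfolding V_def using G_add[of 0 x y] x True by simp
        moreover have "\<bar>measure lebesgue (G x y) - (y - x) * c * (h x)\<^sup>2\<bar> \<le> (y - x) * c * e"
          using key[of x y] True dy by (simp add: dist_real_def)
        ultimately have "\<bar>(V y - V x) - (y - x) * (c * (h x)\<^sup>2)\<bar> \<le> (y - x) * (c * e)" by (simp add: algebra_simps)
        then have "\<bar>((V y - V x) - (y - x) * (c * (h x)\<^sup>2)) / (y - x)\<bar> \<le> c * e"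
          using True by (simp add: abs_divide divide_le_eq mult.commute)
        moreover have "((V y - V x) - (y - x) * (c * (h x)\<^sup>2)) / (y - x) = (V y - V x) / (y - x) - c * (h x)\<^sup>2"
          using True by (simp add: field_simps)
        ultimately show ?thesis using ce eps by (simp add: dist_real_def)
      next
        case False
        then have yx: "y < x" using dy by (auto simp: dist_real_def)
        have "V x = V y + measure lebesgue (G y x)" unfolding V_def using G_add[of 0 y x] y yx by simp
        moreover have "\<bar>measure lebesgue (G y x) - (x - y) * c * (h x)\<^sup>2\<bar> \<le> (x - y) * c * e"
          using key[of y x] yx dy by (simp add: dist_real_def)
        ultimately have "\<bar>(V x - V y) - (x - y) * (c * (h x)\<^sup>2)\<bar> \<le> (x - y) * (c * e)" by (simp add: algebra_simps)
        then have "\<bar>((V x - V y) - (x - y) * (c * (h x)\<^sup>2)) / (x - y)\<bar> \<le> c * e"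
          using yx by (simp add: abs_divide divide_le_eq mult.commute)
        moreover have "((V x - V y) - (x - y) * (c * (h x)\<^sup>2)) / (x - y) = (V y - V x) / (y - x) - c * (h x)\<^sup>2"
          using yx by (simp add: field_simps)
        ultimately show ?thesis using ce eps by (simp add: dist_real_def)
      qed
    qed
  qed
qed

lemma G_measure: "measure lebesgue (G 0 1) = \<bar>Qv\<bar> / 6 * integral {0..1} (\<lambda>t. (h t)\<^sup>2)"
proof -
  have d: "(V has_vector_derivative ((\<bar>Qv\<bar> / 6) * (h x)\<^sup>2)) (at x within {0..1})" if "x \<in> {0..1}" for x
    using V_deriv[OF that] by (simp add: has_real_derivative_iff_has_vector_derivative)
  have "((\<lambda>t. (\<bar>Qv\<bar> / 6) * (h t)\<^sup>2) has_integral (V 1 - V 0)) {0..1}"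
    by (rule fundamental_theorem_of_calculus[OF _ d]) simp_all
  moreover have "V 0 = 0" unfolding V_def by (rule G_zero)
  ultimately have "((\<lambda>t. (\<bar>Qv\<bar> / 6) * (h t)\<^sup>2) has_integral V 1) {0..1}" by simp
  then have "integral {0..1} (\<lambda>t. (\<bar>Qv\<bar> / 6) * (h t)\<^sup>2) = V 1" by (rule integral_unique)
  moreover have "(\<lambda>t. (h t)\<^sup>2) integrable_on {0..1}"
    by (rule integrable_continuous_interval) (intro continuous_intros continuous_on_subset[OF h_cont]; simp)
  ultimately show ?thesis unfolding V_def by simp
qed

end

lemma triple_cyc: "a \<bullet> cross3 b c = b \<bullet> cross3 c a" "a \<bullet> cross3 b c = c \<bullet> cross3 a b"
  by (simp_all add: cross3_simps)

context face
begin

lemma face_eq: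
  assumes D: "0 < B1 \<bullet> cross3 B2 B3"
  shows "{(1 - l) *\<^sub>R P + l *\<^sub>R y | l y. 0 \<le> l \<and> l \<le> 1 \<and> y \<in> K \<and> 0 \<le> y \<bullet> cross3 B2 B3 \<and> 0 \<le> y \<bullet> cross3 B3 B1 \<and> y \<bullet> cross3 B1 B2 = 0} = G 0 1"
    (is "?C = _")
proof
  define d where "d = B1 \<bullet> cross3 B2 B3"
  have d2: "B2 \<bullet> cross3 B3 B1 = d" "B3 \<bullet> cross3 B1 B2 = d" unfolding d_def using triple_cyc by metis+
  show "?C \<subseteq> G 0 1"
  proof
    fix x assume "x \<in> ?C"
    then obtain l y where x: "x = (1 - l) *\<^sub>R P + l *\<^sub>R y" and c: "0 \<le> l" "l \<le> 1" "y \<in> K"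
      "0 \<le> y \<bullet> cross3 B2 B3" "0 \<le> y \<bullet> cross3 B3 B1" "y \<bullet> cross3 B1 B2 = 0" by blast
    define al where "al = y \<bullet> cross3 B2 B3 / d"
    define be where "be = y \<bullet> cross3 B3 B1 / d"
    have ab: "0 \<le> al" "0 \<le> be" unfolding al_def be_def d_def using c D by auto
    have "d *\<^sub>R y = (y \<bullet> cross3 B2 B3) *\<^sub>R B1 + (y \<bullet> cross3 B3 B1) *\<^sub>R B2 + (y \<bullet> cross3 B1 B2) *\<^sub>R B3"
      unfolding d_def by (rule recon3)
    then have y: "y = al *\<^sub>R B1 + be *\<^sub>R B2" unfolding al_def be_def using c D d_def
      by (simp add: scaleR_add_right field_simps) (metis (no_types, lifting) less_irrefl scaleR_add_right scaleR_scaleR divide_inverse mult.commute right_inverse scaleR_one)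
    show "x \<in> G 0 1"
    proof (cases "al + be = 0")
      case True
      then have "al = 0" "be = 0" using ab by auto
      then have "x = (1 - l) *\<^sub>R P + (l * 0) *\<^sub>R w 0" using x y by simp
      then show ?thesis unfolding G_def using c h_pos[of 0] by fastforce
    next
      case False
      define r where "r = al + be"
      define t where "t = be / r"
      have r: "0 < r" using False ab unfolding r_def by auto
      have t: "0 \<le> t" "t \<le> 1" unfolding t_def r_def using ab r r_def by (auto simp: field_simps)
      have e1: "r * (1 - t) = al" using r unfolding t_def r_def by (simp add: field_simps)
      have e2: "r * t = be" using r unfolding t_def r_def by (simp add: field_simps)
      have yw: "y = r *\<^sub>R w t" unfolding w_def
        by (simp only: y scaleR_add_right scaleR_scaleR e1 e2)
      have "r \<le> h t" unfolding h_def using radial_iff[OF w_nz] c(3) yw r by auto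
      moreover have "x = (1 - l) *\<^sub>R P + (l * r) *\<^sub>R w t" using x yw by simp
      ultimately show ?thesis unfolding G_def using c t r by fastforce
    qed
  qed
  show "G 0 1 \<subseteq> ?C"
  proof
    fix x assume "x \<in> G 0 1"
    then obtain l t r where x: "x = (1 - l) *\<^sub>R P + (l * r) *\<^sub>R w t" and
      c: "0 \<le> l" "l \<le> 1" "0 \<le> t" "t \<le> 1" "0 \<le> r" "r \<le> h t" unfolding G_def by blast
    define y where "y = r *\<^sub>R w t"
    have yK: "y \<in> K" unfolding y_def by (rule rw_in[OF c(5,6)])
    have z1: "B1 \<bullet> cross3 B3 B1 = 0" "B2 \<bullet> cross3 B2 B3 = 0" "B1 \<bullet> cross3 B1 B2 = 0" "B2 \<bullet> cross3 B1 B2 = 0"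
      by (simp_all add: dot_cross_self)
    have y1: "y \<bullet> cross3 B2 B3 = r * (1 - t) * d" unfolding y_def w_def d_def
      by (simp add: inner_add_left z1)
    have y2: "y \<bullet> cross3 B3 B1 = r * t * d" unfolding y_def w_def using d2
      by (simp add: inner_add_left z1)
    have y3: "y \<bullet> cross3 B1 B2 = 0" unfolding y_def w_def by (simp add: inner_add_left z1)
    have "0 \<le> y \<bullet> cross3 B2 B3" "0 \<le> y \<bullet> cross3 B3 B1" unfolding y1 y2 d_def using c D by auto
    moreover have "x = (1 - l) *\<^sub>R P + l *\<^sub>R y" unfolding x y_def by simp
    ultimately show "x \<in> ?C" using c yK y3 by blast
  qed
qed

end

definition Fset :: "(real^3) set \<Rightarrow> (nat \<Rightarrow> real^3) \<Rightarrow> nat set \<Rightarrow> nat \<Rightarrow> (real^3) set" where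
  "Fset K n I i = {y \<in> K. (\<forall>j\<in>I. 0 \<le> y \<bullet> n j) \<and> y \<bullet> n i = 0}"

definition Cset :: "(real^3) set \<Rightarrow> (nat \<Rightarrow> real^3) \<Rightarrow> nat set \<Rightarrow> real^3 \<Rightarrow> nat \<Rightarrow> (real^3) set" where
  "Cset K n I P i = {(1 - l) *\<^sub>R P + l *\<^sub>R y | l y. 0 \<le> l \<and> l \<le> 1 \<and> y \<in> Fset K n I i}"

definition Rset :: "(real^3) set \<Rightarrow> (nat \<Rightarrow> real^3) \<Rightarrow> nat set \<Rightarrow> (real^3) set" where
  "Rset K n I = {x \<in> K. \<forall>j\<in>I. 0 \<le> x \<bullet> n j}"

lemma lin_dot: "((1 - l) *\<^sub>R P + l *\<^sub>R y) \<bullet> v = (1 - l) * (P \<bullet> v) + l * (y \<bullet> v)"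
  by (simp add: inner_add_left)

lemma cover:
  assumes vK: "convex K" and PK: "P \<in> K" and fI: "finite I" and iI: "i \<in> I" and qi: "0 < P \<bullet> n i"
  shows "Cset K n I P i \<subseteq> Rset K n I \<union> \<Union> (Cset K n I P ` {j \<in> I. P \<bullet> n j < 0})"
proof
  fix x assume "x \<in> Cset K n I P i"
  then obtain l y where x: "x = (1 - l) *\<^sub>R P + l *\<^sub>R y" and l: "0 \<le> l" "l \<le> 1"
    and yK: "y \<in> K" and yn: "\<And>j. j \<in> I \<Longrightarrow> 0 \<le> y \<bullet> n j" and yi: "y \<bullet> n i = 0"
    unfolding Cset_def Fset_def by blast
  have xK: "x \<in> K" unfolding x by (rule convexD[OF vK PK yK]) (use l in auto)
  show "x \<in> Rset K n I \<union> \<Union> (Cset K n I P ` {j \<in> I. P \<bullet> n j < 0})"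
  proof (cases "\<forall>j\<in>I. 0 \<le> x \<bullet> n j")
    case True
    then show ?thesis unfolding Rset_def using xK by auto
  next
    case False
    then obtain j1 where j1: "j1 \<in> I" "x \<bullet> n j1 < 0" by (auto simp: not_le)
    define J where "J = {j \<in> I. P \<bullet> n j < 0}"
    have xj: "x \<bullet> n j = (1 - l) * (P \<bullet> n j) + l * (y \<bullet> n j)" for j unfolding x by (rule lin_dot)
    have qj1: "P \<bullet> n j1 < 0"
    proof (rule ccontr)
      assume "\<not> P \<bullet> n j1 < 0"
      then have "0 \<le> (1 - l) * (P \<bullet> n j1) + l * (y \<bullet> n j1)" using l yn[OF j1(1)] by simp
      then show False using j1 xj by simp
    qed
    have J1: "j1 \<in> J" unfolding J_def using j1 qj1 by simp
    define s where "s j = P \<bullet> n j / (P \<bullet> n j - y \<bullet> n j)" for j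
    have sJ: "0 < s j \<and> s j \<le> 1" if "j \<in> J" for j
    proof -
      have "P \<bullet> n j < 0" "0 \<le> y \<bullet> n j" using that yn unfolding J_def by auto
      then show ?thesis unfolding s_def by (auto simp: field_simps)
    qed
    have fJ: "finite J" unfolding J_def using fI by simp
    have neJ: "J \<noteq> {}" using J1 by auto
    define s0 where "s0 = Max (s ` J)"
    have s0in: "s0 \<in> s ` J" unfolding s0_def by (rule Max_in) (use fJ neJ in auto)
    then obtain j0 where j0: "j0 \<in> J" "s j0 = s0" by auto
    have s0ge: "s j \<le> s0" if "j \<in> J" for j unfolding s0_def using fJ that by (intro Max_ge) auto
    have s0: "0 < s0" "s0 \<le> 1" using sJ[OF j0(1)] j0 by auto
    have ls: "l < s0"
    proof -
      have "(1 - l) * (P \<bullet> n j1) + l * (y \<bullet> n j1) < 0" using j1 xj by simp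
      moreover have "P \<bullet> n j1 < 0" "0 \<le> y \<bullet> n j1" using qj1 yn j1 by auto
      ultimately have "l < s j1" unfolding s_def by (auto simp: field_simps)
      then show ?thesis using s0ge[OF J1] by simp
    qed
    define z where "z = (1 - s0) *\<^sub>R P + s0 *\<^sub>R y"
    have zK: "z \<in> K" unfolding z_def by (rule convexD[OF vK PK yK]) (use s0 in auto)
    have zj: "z \<bullet> n j = (1 - s0) * (P \<bullet> n j) + s0 * (y \<bullet> n j)" for j unfolding z_def by (rule lin_dot)
    have zn: "0 \<le> z \<bullet> n k" if k: "k \<in> I" for k
    proof (cases "P \<bullet> n k < 0")
      case False
      then show ?thesis unfolding zj using s0 yn[OF k] by simp
    next
      case True
      then have kJ: "k \<in> J" unfolding J_def using k by simp
      have "s k \<le> s0" by (rule s0ge[OF kJ])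
      moreover have "0 \<le> y \<bullet> n k" using yn[OF k] .
      ultimately show ?thesis unfolding zj s_def using True by (auto simp: field_simps)
    qed
    have z0: "z \<bullet> n j0 = 0"
    proof -
      have "P \<bullet> n j0 < 0" "0 \<le> y \<bullet> n j0" using j0 yn unfolding J_def by auto
      then show ?thesis unfolding zj j0(2)[symmetric] s_def by (simp add: field_simps)
    qed
    have zF: "z \<in> Fset K n I j0" unfolding Fset_def using zK zn z0 by blast
    have "x = (1 - l / s0) *\<^sub>R P + (l / s0) *\<^sub>R z"
      unfolding x z_def using s0 by (simp add: scaleR_add_right algebra_simps)
    moreover have "0 \<le> l / s0" "l / s0 \<le> 1" using l s0 ls by auto
    ultimately have "x \<in> Cset K n I P j0" unfolding Cset_def using zF by blast
    then show ?thesis using j0(1) unfolding J_def by blast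
  qed
qed

lemma pair:
  assumes qi: "0 < P \<bullet> n i" and qj: "0 < P \<bullet> n j" and iI: "i \<in> I" and jI: "j \<in> I"
  shows "Cset K n I P i \<inter> Cset K n I P j \<subseteq> {(1 - l) *\<^sub>R P + l *\<^sub>R y | l y. y \<bullet> n i = 0 \<and> y \<bullet> n j = 0}"
proof
  fix x assume "x \<in> Cset K n I P i \<inter> Cset K n I P j"
  then obtain l y m z where x: "x = (1 - l) *\<^sub>R P + l *\<^sub>R y" and l: "0 \<le> l" "l \<le> 1"
    and yn: "\<And>k. k \<in> I \<Longrightarrow> 0 \<le> y \<bullet> n k" and yi: "y \<bullet> n i = 0"
    and x': "x = (1 - m) *\<^sub>R P + m *\<^sub>R z" and m: "0 \<le> m" "m \<le> 1"
    and zn: "\<And>k. k \<in> I \<Longrightarrow> 0 \<le> z \<bullet> n k" and zj: "z \<bullet> n j = 0"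
    unfolding Cset_def Fset_def by blast
  show "x \<in> {(1 - l) *\<^sub>R P + l *\<^sub>R y | l y. y \<bullet> n i = 0 \<and> y \<bullet> n j = 0}"
  proof (cases "l = 0 \<or> m = 0")
    case True
    then have "x = (1 - 0) *\<^sub>R P + 0 *\<^sub>R (0::real^3)" using x x' by auto
    then show ?thesis by fastforce
  next
    case False
    have ei: "(1 - l) * (P \<bullet> n i) + l * (y \<bullet> n i) = (1 - m) * (P \<bullet> n i) + m * (z \<bullet> n i)"
      using x x' lin_dot by metis
    have ej: "(1 - l) * (P \<bullet> n j) + l * (y \<bullet> n j) = (1 - m) * (P \<bullet> n j) + m * (z \<bullet> n j)"
      using x x' lin_dot by metis
    have a1: "l \<le> m"
    proof -
      have "(m - l) * (P \<bullet> n i) = m * (z \<bullet> n i)" using ei yi by (simp add: algebra_simps)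
      moreover have "0 \<le> m * (z \<bullet> n i)" using m zn[OF iI] by simp
      ultimately have "0 \<le> (m - l) * (P \<bullet> n i)" by simp
      then show ?thesis using qi by (simp add: zero_le_mult_iff)
    qed
    have a2: "m \<le> l"
    proof -
      have "(l - m) * (P \<bullet> n j) = l * (y \<bullet> n j)" using ej zj by (simp add: algebra_simps)
      moreover have "0 \<le> l * (y \<bullet> n j)" using l yn[OF jI] by simp
      ultimately have "0 \<le> (l - m) * (P \<bullet> n j)" by simp
      then show ?thesis using qj by (simp add: zero_le_mult_iff)
    qed
    have lm: "l = m" using a1 a2 by simp
    have xz: "x = (1 - l) *\<^sub>R P + l *\<^sub>R z" unfolding lm by (rule x')
    have "(1 - l) *\<^sub>R P + l *\<^sub>R y = (1 - l) *\<^sub>R P + l *\<^sub>R z" by (rule trans[OF x[symmetric] xz])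
    then have "l *\<^sub>R y = l *\<^sub>R z" by (rule add_left_imp_eq)
    then have "y = z" using False by simp
    then have "y \<bullet> n j = 0" using zj by simp
    then show ?thesis using x yi by blast
  qed
qed

lemma face_measure:
  assumes cb: "cbody K" and PK: "P \<in> K" and D: "0 < B1 \<bullet> cross3 B2 B3" and Q: "P \<bullet> cross3 B1 B2 \<noteq> 0"
  defines "S \<equiv> {(1 - l) *\<^sub>R P + l *\<^sub>R y | l y. 0 \<le> l \<and> l \<le> 1 \<and> y \<in> K \<and> 0 \<le> y \<bullet> cross3 B2 B3 \<and> 0 \<le> y \<bullet> cross3 B3 B1 \<and> y \<bullet> cross3 B1 B2 = 0}"
  shows "S \<in> lmeasurable"
    "measure lebesgue S = \<bar>P \<bullet> cross3 B1 B2\<bar> / 6 * integral {0..1} (\<lambda>t. (radial K ((1 - t) *\<^sub>R B1 + t *\<^sub>R B2))\<^sup>2)"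
proof -
  have nz: "cross3 B1 B2 \<noteq> 0"
  proof
    assume "cross3 B1 B2 = 0"
    then have "B3 \<bullet> cross3 B1 B2 = 0" by simp
    then show False using D triple_cyc(2)[of B1 B2 B3] by simp
  qed
  interpret face K B1 B2 P
    by (rule face.intro[OF cb]) (unfold_locales, use nz PK Q in auto)
  have SG: "S = G 0 1" unfolding S_def by (rule face_eq[OF D])
  show "S \<in> lmeasurable" unfolding SG by (rule G_meas)
  show "measure lebesgue S = \<bar>P \<bullet> cross3 B1 B2\<bar> / 6 * integral {0..1} (\<lambda>t. (radial K ((1 - t) *\<^sub>R B1 + t *\<^sub>R B2))\<^sup>2)"
    unfolding SG G_measure Qv_def h_def w_def ..
qed

lemma zero_interior:
  assumes "convex_body K" "centrally_symmetric K"
  shows "0 \<in> interior K"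
proof -
  have vK: "convex K" and iK: "interior K \<noteq> {}" using assms(1) unfolding convex_body_def by auto
  obtain z where "z \<in> interior K" using iK by auto
  then obtain e where e: "0 < e" "ball z e \<subseteq> K" using mem_interior by blast
  have "ball 0 e \<subseteq> K"
  proof
    fix y :: "real^3" assume y: "y \<in> ball 0 e"
    have a: "z + y \<in> K" using e y by (intro subsetD[OF e(2)]) (simp add: dist_norm)
    have "z - y \<in> K" using e y by (intro subsetD[OF e(2)]) (simp add: dist_norm)
    then have b: "y - z \<in> K" using assms(2) unfolding centrally_symmetric_def
      by (metis (no_types, lifting) image_eqI minus_diff_eq)
    have "(1/2) *\<^sub>R (z + y) + (1/2) *\<^sub>R (y - z) \<in> K" by (rule convexD[OF vK a b]) auto
    moreover have "(1/2) *\<^sub>R (z + y) + (1/2) *\<^sub>R (y - z) = y"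
    proof -
      have "(1/2) *\<^sub>R (z + y) + (1/2) *\<^sub>R (y - z) = (1/2::real) *\<^sub>R ((z + y) + (y - z))"
        by (rule scaleR_add_right[symmetric])
      also have "(z + y) + (y - z) = (2::real) *\<^sub>R y" by (simp add: scaleR_2)
      finally show ?thesis by simp
    qed
    ultimately show "y \<in> K" by simp
  qed
  then show ?thesis using e(1) by (meson centre_in_ball interior_maximal open_ball subsetD)
qed

theorem lemma7p1:
  fixes K :: "(real^3) set" and A1 A2 A3 P :: "real^3"
  assumes "convex_body K" and "centrally_symmetric K"
    and "A1 \<in> frontier K" and "A2 \<in> frontier K" and "A3 \<in> frontier K"
    and "A1 \<bullet> cross3 A2 A3 > 0"
    and "P \<in> K"
  shows "(1/3) * (P \<bullet> ((1/2) *\<^sub>R (integral {0..1} (\<lambda>t. (radial K ((1 - t) *\<^sub>R A1 + t *\<^sub>R A2))\<^sup>2)) *\<^sub>R cross3 A1 A2)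
               + P \<bullet> ((1/2) *\<^sub>R (integral {0..1} (\<lambda>t. (radial K ((1 - t) *\<^sub>R A2 + t *\<^sub>R A3))\<^sup>2)) *\<^sub>R cross3 A2 A3)
               + P \<bullet> ((1/2) *\<^sub>R (integral {0..1} (\<lambda>t. (radial K ((1 - t) *\<^sub>R A3 + t *\<^sub>R A1))\<^sup>2)) *\<^sub>R cross3 A3 A1))
         \<le> measure lebesgue (K \<inter> {t1 *\<^sub>R A1 + t2 *\<^sub>R A2 + t3 *\<^sub>R A3 | t1 t2 t3. t1 \<ge> 0 \<and> t2 \<ge> 0 \<and> t3 \<ge> 0})"
proof -
  have cK: "compact K" and vK: "convex K" using assms(1) unfolding convex_body_def by auto
  have iK: "0 \<in> interior K" by (rule zero_interior[OF assms(1,2)])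
  have cb: "cbody K" by (unfold_locales) (use cK vK iK in auto)
  have PK: "P \<in> K" by (rule assms(7))
  define D where "D = A1 \<bullet> cross3 A2 A3"
  have D: "0 < D" unfolding D_def by (rule assms(6))
  define I12 where "I12 = integral {0..1} (\<lambda>t. (radial K ((1 - t) *\<^sub>R A1 + t *\<^sub>R A2))\<^sup>2)"
  define I23 where "I23 = integral {0..1} (\<lambda>t. (radial K ((1 - t) *\<^sub>R A2 + t *\<^sub>R A3))\<^sup>2)"
  define I31 where "I31 = integral {0..1} (\<lambda>t. (radial K ((1 - t) *\<^sub>R A3 + t *\<^sub>R A1))\<^sup>2)"
  define n :: "nat \<Rightarrow> real^3" where "n i = (if i = 0 then cross3 A2 A3 else if i = 1 then cross3 A3 A1 else cross3 A1 A2)" for i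
  define A :: "nat \<Rightarrow> real^3" where "A i = (if i = 0 then A1 else if i = 1 then A2 else A3)" for i
  define Iv :: "nat \<Rightarrow> real" where "Iv i = (if i = 0 then I23 else if i = 1 then I31 else I12)" for i
  define I :: "nat set" where "I = {0, 1, 2}"
  define g where "g i = (P \<bullet> n i) * Iv i / 6" for i
  define C where "C i = Cset K n I P i" for i
  define Rc where "Rc = Rset K n I"
  have fI: "finite I" unfolding I_def by simp
  have lhs: "(1/3) * (P \<bullet> ((1/2) *\<^sub>R I12 *\<^sub>R cross3 A1 A2) + P \<bullet> ((1/2) *\<^sub>R I23 *\<^sub>R cross3 A2 A3)
      + P \<bullet> ((1/2) *\<^sub>R I31 *\<^sub>R cross3 A3 A1)) = sum g I"
  proof -
    have "sum g I = g 0 + g 1 + g 2" unfolding I_def by simp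
    also have "\<dots> = (P \<bullet> cross3 A2 A3) * I23 / 6 + (P \<bullet> cross3 A3 A1) * I31 / 6 + (P \<bullet> cross3 A1 A2) * I12 / 6"
      unfolding g_def n_def Iv_def by simp
    finally show ?thesis by (simp add: inner_scaleR_right field_simps)
  qed
  have nv: "n 0 = cross3 A2 A3" "n 1 = cross3 A3 A1" "n 2 = cross3 A1 A2" by (simp_all add: n_def)
  have recon: "D *\<^sub>R x = (x \<bullet> n 0) *\<^sub>R A1 + (x \<bullet> n 1) *\<^sub>R A2 + (x \<bullet> n 2) *\<^sub>R A3" for x
    unfolding D_def nv by (rule recon3)
  have cyc: "A2 \<bullet> cross3 A3 A1 = D" "A3 \<bullet> cross3 A1 A2 = D" unfolding D_def by (rule triple_cyc(1)[symmetric], rule triple_cyc(2)[symmetric])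
  have zer: "A1 \<bullet> cross3 A3 A1 = 0" "A1 \<bullet> cross3 A1 A2 = 0" "A2 \<bullet> cross3 A2 A3 = 0"
    "A2 \<bullet> cross3 A1 A2 = 0" "A3 \<bullet> cross3 A2 A3 = 0" "A3 \<bullet> cross3 A3 A1 = 0"
    by (simp_all add: dot_cross_self)
  have region: "K \<inter> {t1 *\<^sub>R A1 + t2 *\<^sub>R A2 + t3 *\<^sub>R A3 | t1 t2 t3. t1 \<ge> 0 \<and> t2 \<ge> 0 \<and> t3 \<ge> 0} = Rc"
  proof -
    have "{t1 *\<^sub>R A1 + t2 *\<^sub>R A2 + t3 *\<^sub>R A3 | t1 t2 t3. t1 \<ge> 0 \<and> t2 \<ge> 0 \<and> t3 \<ge> 0} = {x. \<forall>j\<in>I. 0 \<le> x \<bullet> n j}"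
    proof
      show "{t1 *\<^sub>R A1 + t2 *\<^sub>R A2 + t3 *\<^sub>R A3 | t1 t2 t3. t1 \<ge> 0 \<and> t2 \<ge> 0 \<and> t3 \<ge> 0} \<subseteq> {x. \<forall>j\<in>I. 0 \<le> x \<bullet> n j}"
        using D unfolding I_def n_def D_def
        by (auto simp: inner_add_left zer cyc[unfolded D_def] D_def)
      show "{x. \<forall>j\<in>I. 0 \<le> x \<bullet> n j} \<subseteq> {t1 *\<^sub>R A1 + t2 *\<^sub>R A2 + t3 *\<^sub>R A3 | t1 t2 t3. t1 \<ge> 0 \<and> t2 \<ge> 0 \<and> t3 \<ge> 0}"
      proof
        fix x assume "x \<in> {x. \<forall>j\<in>I. 0 \<le> x \<bullet> n j}"
        then have c: "0 \<le> x \<bullet> n 0" "0 \<le> x \<bullet> n 1" "0 \<le> x \<bullet> n 2" unfolding I_def by auto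
        have "x = (1 / D) *\<^sub>R (D *\<^sub>R x)" using D by simp
        also have "\<dots> = ((x \<bullet> n 0) / D) *\<^sub>R A1 + ((x \<bullet> n 1) / D) *\<^sub>R A2 + ((x \<bullet> n 2) / D) *\<^sub>R A3"
          unfolding recon by (simp add: scaleR_add_right)
        finally show "x \<in> {t1 *\<^sub>R A1 + t2 *\<^sub>R A2 + t3 *\<^sub>R A3 | t1 t2 t3. t1 \<ge> 0 \<and> t2 \<ge> 0 \<and> t3 \<ge> 0}"
          using c D by fastforce
      qed
    qed
    then show ?thesis unfolding Rc_def Rset_def by auto
  qed
  have Rc_meas: "Rc \<in> lmeasurable"
  proof -
    have "Rc = K \<inter> ({x. 0 \<le> n 0 \<bullet> x} \<inter> {x. 0 \<le> n 1 \<bullet> x} \<inter> {x. 0 \<le> n 2 \<bullet> x})"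
      unfolding Rc_def Rset_def I_def by (auto simp: inner_commute)
    also have "compact \<dots>"
      by (intro compact_Int_closed cK closed_Int closed_halfspace_ge)
    finally show ?thesis by (rule lmeasurable_compact)
  qed
  have Fs: "Fset K n I 2 = {y \<in> K. 0 \<le> y \<bullet> cross3 A2 A3 \<and> 0 \<le> y \<bullet> cross3 A3 A1 \<and> y \<bullet> cross3 A1 A2 = 0}"
    "Fset K n I 0 = {y \<in> K. 0 \<le> y \<bullet> cross3 A3 A1 \<and> 0 \<le> y \<bullet> cross3 A1 A2 \<and> y \<bullet> cross3 A2 A3 = 0}"
    "Fset K n I 1 = {y \<in> K. 0 \<le> y \<bullet> cross3 A1 A2 \<and> 0 \<le> y \<bullet> cross3 A2 A3 \<and> y \<bullet> cross3 A3 A1 = 0}"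
    unfolding Fset_def I_def n_def by auto
  have Cmeas: "C i \<in> lmeasurable \<and> measure lebesgue (C i) = \<bar>P \<bullet> n i\<bar> * Iv i / 6"
    if i: "i \<in> I" and q: "P \<bullet> n i \<noteq> 0" for i
  proof -
    have "i = 0 \<or> i = 1 \<or> i = 2" using i unfolding I_def by auto
    then show ?thesis
    proof (elim disjE)
      assume i0: "i = 0"
      have eq: "C i = {(1 - l) *\<^sub>R P + l *\<^sub>R y | l y. 0 \<le> l \<and> l \<le> 1 \<and> y \<in> K \<and> 0 \<le> y \<bullet> cross3 A3 A1 \<and> 0 \<le> y \<bullet> cross3 A1 A2 \<and> y \<bullet> cross3 A2 A3 = 0}"
        unfolding C_def Cset_def i0 Fs by blast
      have D': "0 < A2 \<bullet> cross3 A3 A1" using cyc D by simp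
      have q': "P \<bullet> cross3 A2 A3 \<noteq> 0" using q i0 n_def by simp
      show ?thesis unfolding eq using face_measure[OF cb PK D' q'] i0 by (simp add: n_def Iv_def I23_def)
    next
      assume i1: "i = 1"
      have eq: "C i = {(1 - l) *\<^sub>R P + l *\<^sub>R y | l y. 0 \<le> l \<and> l \<le> 1 \<and> y \<in> K \<and> 0 \<le> y \<bullet> cross3 A1 A2 \<and> 0 \<le> y \<bullet> cross3 A2 A3 \<and> y \<bullet> cross3 A3 A1 = 0}"
        unfolding C_def Cset_def i1 Fs by blast
      have D': "0 < A3 \<bullet> cross3 A1 A2" using cyc D by simp
      have q': "P \<bullet> cross3 A3 A1 \<noteq> 0" using q i1 n_def by simp
      show ?thesis unfolding eq using face_measure[OF cb PK D' q'] i1 by (simp add: n_def Iv_def I31_def)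
    next
      assume i2: "i = 2"
      have eq: "C i = {(1 - l) *\<^sub>R P + l *\<^sub>R y | l y. 0 \<le> l \<and> l \<le> 1 \<and> y \<in> K \<and> 0 \<le> y \<bullet> cross3 A2 A3 \<and> 0 \<le> y \<bullet> cross3 A3 A1 \<and> y \<bullet> cross3 A1 A2 = 0}"
        unfolding C_def Cset_def i2 Fs by blast
      have D': "0 < A1 \<bullet> cross3 A2 A3" using D D_def by simp
      have q': "P \<bullet> cross3 A1 A2 \<noteq> 0" using q i2 n_def by simp
      show ?thesis unfolding eq using face_measure[OF cb PK D' q'] i2 by (simp add: n_def Iv_def I12_def)
    qed
  qed
  define Jp where "Jp = {i \<in> I. 0 < P \<bullet> n i}"
  define Jm where "Jm = {i \<in> I. P \<bullet> n i < 0}"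
  have fJ: "finite Jp" "finite Jm" unfolding Jp_def Jm_def using fI by auto
  have spanA: "y \<in> span {A (3 - a - b)}" if ab: "a \<in> I" "b \<in> I" "a \<noteq> b" and y: "y \<bullet> n a = 0" "y \<bullet> n b = 0" for a b y
  proof -
    have ry: "y = ((y \<bullet> n 0) / D) *\<^sub>R A1 + ((y \<bullet> n 1) / D) *\<^sub>R A2 + ((y \<bullet> n 2) / D) *\<^sub>R A3"
    proof -
      have "y = (1 / D) *\<^sub>R (D *\<^sub>R y)" using D by simp
      also have "\<dots> = ((y \<bullet> n 0) / D) *\<^sub>R A1 + ((y \<bullet> n 1) / D) *\<^sub>R A2 + ((y \<bullet> n 2) / D) *\<^sub>R A3"
        unfolding recon by (simp add: scaleR_add_right)
      finally show ?thesis .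
    qed
    have h01: "y \<in> span {A3}" if "y \<bullet> n 0 = 0" "y \<bullet> n 1 = 0"
    proof -
      have "((y \<bullet> n 0) / D) *\<^sub>R A1 + ((y \<bullet> n 1) / D) *\<^sub>R A2 + ((y \<bullet> n 2) / D) *\<^sub>R A3 = ((y \<bullet> n 2) / D) *\<^sub>R A3"
        using that by simp
      then have "y = ((y \<bullet> n 2) / D) *\<^sub>R A3" by (rule trans[OF ry])
      then show ?thesis by (metis span_base span_mul singletonI)
    qed
    have h02: "y \<in> span {A2}" if "y \<bullet> n 0 = 0" "y \<bullet> n 2 = 0"
    proof -
      have "((y \<bullet> n 0) / D) *\<^sub>R A1 + ((y \<bullet> n 1) / D) *\<^sub>R A2 + ((y \<bullet> n 2) / D) *\<^sub>R A3 = ((y \<bullet> n 1) / D) *\<^sub>R A2"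
        using that by simp
      then have "y = ((y \<bullet> n 1) / D) *\<^sub>R A2" by (rule trans[OF ry])
      then show ?thesis by (metis span_base span_mul singletonI)
    qed
    have h12: "y \<in> span {A1}" if "y \<bullet> n 1 = 0" "y \<bullet> n 2 = 0"
    proof -
      have "((y \<bullet> n 0) / D) *\<^sub>R A1 + ((y \<bullet> n 1) / D) *\<^sub>R A2 + ((y \<bullet> n 2) / D) *\<^sub>R A3 = ((y \<bullet> n 0) / D) *\<^sub>R A1"
        using that by simp
      then have "y = ((y \<bullet> n 0) / D) *\<^sub>R A1" by (rule trans[OF ry])
      then show ?thesis by (metis span_base span_mul singletonI)
    qed
    have "(a = 0 \<and> b = 1) \<or> (a = 1 \<and> b = 0) \<or> (a = 0 \<and> b = 2) \<or> (a = 2 \<and> b = 0) \<or> (a = 1 \<and> b = 2) \<or> (a = 2 \<and> b = 1)"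
      using ab unfolding I_def by auto
    then show ?thesis
      using h01 h02 h12 y by (auto simp: A_def)
  qed
  have negl: "negligible (C a \<inter> C b)" if ab: "a \<in> Jp" "b \<in> Jp" "a \<noteq> b" for a b
  proof -
    have abI: "a \<in> I" "b \<in> I" and qa: "0 < P \<bullet> n a" and qb: "0 < P \<bullet> n b" using ab unfolding Jp_def by auto
    have "C a \<inter> C b \<subseteq> {(1 - l) *\<^sub>R P + l *\<^sub>R y | l y. y \<bullet> n a = 0 \<and> y \<bullet> n b = 0}"
      unfolding C_def by (rule pair[OF qa qb abI])
    also have "\<dots> \<subseteq> span {P, A (3 - a - b)}"
    proof
      fix x assume "x \<in> {(1 - l) *\<^sub>R P + l *\<^sub>R y | l y. y \<bullet> n a = 0 \<and> y \<bullet> n b = 0}"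
      then obtain l y where x: "x = (1 - l) *\<^sub>R P + l *\<^sub>R y" and y: "y \<bullet> n a = 0" "y \<bullet> n b = 0" by blast
      have "y \<in> span {A (3 - a - b)}" by (rule spanA[OF abI ab(3) y])
      then have "y \<in> span {P, A (3 - a - b)}" by (rule subsetD[OF span_mono, rotated]) auto
      moreover have "P \<in> span {P, A (3 - a - b)}" by (simp add: span_base)
      ultimately show "x \<in> span {P, A (3 - a - b)}" unfolding x by (intro span_add span_mul)
    qed
    finally show ?thesis by (rule negligible_subset[OF negl_span2])
  qed
  have Cm_p: "C i \<in> lmeasurable \<and> measure lebesgue (C i) = g i" if "i \<in> Jp" for i
    using Cmeas[of i] that unfolding Jp_def g_def by auto
  have Cm_m: "C i \<in> lmeasurable \<and> measure lebesgue (C i) = - g i" if "i \<in> Jm" for i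
    using Cmeas[of i] that unfolding Jm_def g_def by auto
  have U1: "measure lebesgue (\<Union>(C ` Jp)) = (\<Sum>i\<in>Jp. measure lebesgue (C i))"
    by (rule measure_negligible_finite_Union_image[OF fJ(1)]) (use Cm_p negl in \<open>auto simp: pairwise_def\<close>)
  have cov: "\<Union>(C ` Jp) \<subseteq> Rc \<union> \<Union>(C ` Jm)"
  proof (rule UN_least)
    fix i assume i: "i \<in> Jp"
    show "C i \<subseteq> Rc \<union> \<Union>(C ` Jm)"
      unfolding C_def Rc_def Jm_def using cover[OF vK PK fI, of i n] i unfolding Jp_def by auto
  qed
  have mJp: "\<Union>(C ` Jp) \<in> lmeasurable" using Cm_p fJ(1) by (intro fmeasurable.finite_UN) auto
  have mJm: "\<Union>(C ` Jm) \<in> lmeasurable" using Cm_m fJ(2) by (intro fmeasurable.finite_UN) auto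
  have "measure lebesgue (\<Union>(C ` Jp)) \<le> measure lebesgue (Rc \<union> \<Union>(C ` Jm))"
    by (rule measure_mono_fmeasurable[OF cov fmeasurableD[OF mJp] fmeasurable.Un[OF Rc_meas mJm]])
  also have "\<dots> \<le> measure lebesgue Rc + measure lebesgue (\<Union>(C ` Jm))"
    by (rule measure_Un_le[OF fmeasurableD[OF Rc_meas] fmeasurableD[OF mJm]])
  also have "measure lebesgue (\<Union>(C ` Jm)) \<le> (\<Sum>i\<in>Jm. measure lebesgue (C i))"
    by (rule measure_UNION_le[OF fJ(2)]) (use Cm_m in \<open>auto intro: fmeasurableD\<close>)
  finally have main: "(\<Sum>i\<in>Jp. g i) \<le> measure lebesgue Rc + (\<Sum>i\<in>Jm. - g i)"
    using U1 Cm_p Cm_m by simp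
  have split: "sum g I = (\<Sum>i\<in>Jp. g i) + (\<Sum>i\<in>Jm. g i)"
  proof -
    have "sum g I = (\<Sum>i\<in>I. (if 0 < P \<bullet> n i then g i else 0) + (if P \<bullet> n i < 0 then g i else 0))"
      by (rule sum.cong) (auto simp: g_def)
    also have "\<dots> = (\<Sum>i\<in>I. if 0 < P \<bullet> n i then g i else 0) + (\<Sum>i\<in>I. if P \<bullet> n i < 0 then g i else 0)"
      by (rule sum.distrib)
    also have "\<dots> = (\<Sum>i\<in>Jp. g i) + (\<Sum>i\<in>Jm. g i)"
      unfolding Jp_def Jm_def by (simp add: sum.inter_filter[OF fI])
    finally show ?thesis .
  qed
  have "sum g I \<le> measure lebesgue Rc"
    using main split by (simp add: sum_negf)
  then show ?thesis using lhs region unfolding I12_def I23_def I31_def by simp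
qed

end
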